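(* We have \[ \lim_{R\to \infty} R^4 \int_0^\infty \frac{\sin^2(\pi R x)}{1 -(Rx)^2}\, \frac{x \tanh(\pi x)}{(R x)^2}\,dx = \frac{\pi^2}{2}\int_0^\infty \frac{\sinh(x)\cosh(x)-x}{x^3\cosh^2(x)}\,dx > 4.20718. \]
   Context: The integrand on the left is understood to be extended continuously at $Rx=1$ (where numerator and denominator both vanish). *)

theory Defs
  imports "HOL-Analysis.Analysis"
begin

text \<open>Integrand on the left. At R x = 1 (and at x = 0) the formula has a vanishing
denominator; the continuous extension there is 0, which coincides with the value
produced by the convention a / 0 = 0.\<close>
definition lhs_integrand :: "real \<Rightarrow> real \<Rightarrow> real" where
  "lhs_integrand R x =
     (sin (pi * R * x))^2 / (1 - (R * x)^2) * (x * tanh (pi * x) / (R * x)^2)"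

definition rhs_integrand :: "real \<Rightarrow> real" where
  "rhs_integrand x = (sinh x * cosh x - x) / (x^3 * (cosh x)^2)"

end

theory Submission
  imports Defs "HOL-Real_Asymp.Real_Asymp"
begin

lemma Digamma_reflection:
  fixes z :: complex
  assumes z: "z \<notin> \<int>"
  shows "Digamma (1 - z) - Digamma z = of_real pi * cot (of_real pi * z)"
proof -
  have z1: "z \<notin> \<int>\<^sub>\<le>\<^sub>0" using z nonpos_Ints_subset_Ints by blast
  have z2: "1 - z \<notin> \<int>\<^sub>\<le>\<^sub>0" using z Ints_diff[of 1 "1 - z"] nonpos_Ints_subset_Ints by auto
  have s: "sin (of_real pi * z) \<noteq> 0"
    using z by (auto simp: sin_eq_0 Ints_def)
  have d1: "((\<lambda>z. Gamma z * Gamma (1 - z)) has_field_derivative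
      (Gamma z * Digamma z * Gamma (1 - z) - Gamma z * (Gamma (1 - z) * Digamma (1 - z)))) (at z)"
    using z1 z2 by (auto intro!: derivative_eq_intros simp: algebra_simps)
  have d2: "((\<lambda>z. of_real pi / sin (of_real pi * z)) has_field_derivative
      (- (of_real pi * (cos (of_real pi * z) * of_real pi)) / (sin (of_real pi * z))^2)) (at z)"
    using s by (auto intro!: derivative_eq_intros simp: power2_eq_square)
  have eqf: "(\<lambda>z::complex. Gamma z * Gamma (1 - z)) = (\<lambda>z. of_real pi / sin (of_real pi * z))"
    using Gamma_reflection_complex by auto
  have eq: "Gamma z * Digamma z * Gamma (1 - z) - Gamma z * (Gamma (1 - z) * Digamma (1 - z))
      = - (of_real pi * (cos (of_real pi * z) * of_real pi)) / (sin (of_real pi * z))^2"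
    using DERIV_unique[OF d1 d2[folded eqf]] by simp
  have G: "Gamma z * Gamma (1 - z) = of_real pi / sin (of_real pi * z)"
    using Gamma_reflection_complex by auto
  have "Gamma z * Gamma (1 - z) * (Digamma z - Digamma (1 - z)) = of_real pi / sin (of_real pi * z) * (- of_real pi * cot (of_real pi * z))"
    using eq s by (simp add: cot_def field_simps power2_eq_square)
  hence "of_real pi / sin (of_real pi * z) * (Digamma z - Digamma (1 - z)) = of_real pi / sin (of_real pi * z) * (- of_real pi * cot (of_real pi * z))"
    by (simp add: G)
  moreover have "of_real pi / sin (of_real pi * z) \<noteq> 0" using s by simp
  ultimately have "Digamma z - Digamma (1 - z) = - of_real pi * cot (of_real pi * z)"
    by (metis mult_left_cancel)
  thus ?thesis by (simp add: algebra_simps)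
qed

lemma sinh_of_real': "sinh (complex_of_real t) = of_real (sinh t)"
  by (simp add: sinh_def scaleR_conv_of_real flip: exp_of_real)

lemma cosh_of_real': "cosh (complex_of_real t) = of_real (cosh t)"
  by (simp add: cosh_def scaleR_conv_of_real flip: exp_of_real)

lemma cot_half_i: "cot (of_real pi * (1/2 + \<i> * of_real y)) = - \<i> * of_real (tanh (pi * y))"
proof -
  define a where "a = complex_of_real (pi/2)"
  define w where "w = \<i> * complex_of_real (pi*y)"
  have ca: "cos a = 0" unfolding a_def by (simp only: cos_of_real cos_pi_half) simp
  have sa: "sin a = 1" unfolding a_def by (simp only: sin_of_real sin_pi_half) simp
  have e: "of_real pi * (1/2 + \<i> * of_real y) = a + w"
    by (simp add: a_def w_def algebra_simps)
  have sw: "sin w = \<i> * of_real (sinh (pi*y))"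
    unfolding w_def by (simp add: sin_conv_sinh sinh_of_real' del: of_real_mult)
  have cw: "cos w = of_real (cosh (pi*y))"
    unfolding w_def by (simp add: cos_conv_cosh cosh_of_real' del: of_real_mult)
  have c: "cos (a + w) = - \<i> * of_real (sinh (pi*y))"
    by (simp add: cos_add ca sa sw)
  have s: "sin (a + w) = of_real (cosh (pi*y))"
    by (simp add: sin_add ca sa cw)
  have "cosh (pi*y) \<noteq> 0" using cosh_real_pos[of "pi*y"] by simp
  thus ?thesis unfolding e cot_def c s by (simp add: tanh_def field_simps)
qed

lemma tanh_series:
  fixes y :: real
  shows "(\<lambda>k. 8*y / (pi*((2*real k+1)^2 + 4*y^2))) sums tanh (pi*y)"
proof (cases "y = 0")
  case True thus ?thesis by simp
next
  case False
  define z where "z = 1/2 + \<i> * complex_of_real y"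
  have z: "z \<notin> \<int>"
  proof
    assume "z \<in> \<int>"
    then obtain n where "z = of_int n" by (auto elim: Ints_cases)
    hence "Im z = 0" by simp
    thus False using False by (simp add: z_def)
  qed
  have z0: "z \<noteq> 0" using z by auto
  have z1: "1 - z \<noteq> 0" using z by auto
  have s1: "summable (\<lambda>n. inverse (of_nat (Suc n)) - inverse ((1 - z) + of_nat n))"
    by (rule summable_Digamma[OF z1])
  have s2: "summable (\<lambda>n. inverse (of_nat (Suc n)) - inverse (z + of_nat n))"
    by (rule summable_Digamma[OF z0])
  have "(\<lambda>n. (inverse (of_nat (Suc n)) - inverse ((1 - z) + of_nat n)) -
             (inverse (of_nat (Suc n)) - inverse (z + of_nat n))) sums (Digamma (1 - z) - Digamma z)"
    using sums_diff[OF summable_sums[OF s1] summable_sums[OF s2]] by (simp add: Digamma_def)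
  also have "Digamma (1 - z) - Digamma z = - \<i> * of_real (pi * tanh (pi * y))"
    using Digamma_reflection[OF z] cot_half_i[of y] by (simp add: z_def)
  finally have S: "(\<lambda>n. (inverse (of_nat (Suc n)) - inverse ((1 - z) + of_nat n)) -
             (inverse (of_nat (Suc n)) - inverse (z + of_nat n))) sums (- \<i> * of_real (pi * tanh (pi * y)))" .
  have tm: "(inverse (of_nat (Suc n)) - inverse ((1 - z) + of_nat n)) -
             (inverse (of_nat (Suc n)) - inverse (z + of_nat n))
        = - \<i> * of_real (pi * (8*y / (pi*((2*real n+1)^2 + 4*y^2))))" for n
  proof -
    have d1: "(1 - z) + of_nat n = Complex (real n + 1/2) (- y)"
      by (simp add: z_def complex_eq_iff)
    have d2: "z + of_nat n = Complex (real n + 1/2) y"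
      by (simp add: z_def complex_eq_iff)
    define a where "a = real n + 1/2"
    have "y^2 > 0" using False by simp
    hence p2: "a^2 + y^2 > 0" by (simp add: add_nonneg_pos)
    have r1: "pi * (8*y / (pi*((2*real n+1)^2 + 4*y^2))) = 8*y / ((2*real n+1)^2 + 4*y^2)"
      by simp
    have r2: "(2*real n+1)^2 + 4*y^2 = 4 * (a^2+y^2)" unfolding a_def by (simp add: power2_eq_square algebra_simps)
    have r: "pi * (8*y / (pi*((2*real n+1)^2 + 4*y^2))) = y / (a^2 + y^2) * 2"
      unfolding r1 unfolding r2 using p2 by (simp add: divide_simps)
    have "inverse (Complex a y) - inverse (Complex a (-y)) = - \<i> * of_real (y / (a^2 + y^2) * 2)"
      using p2 apply (simp add: complex_eq_iff power2_eq_square Re_divide Im_divide)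
      done
    thus ?thesis unfolding d1 d2 r a_def by simp
  qed
  have "(\<lambda>n. - \<i> * of_real (pi * (8*y / (pi*((2*real n+1)^2 + 4*y^2))))) sums (- \<i> * of_real (pi * tanh (pi * y)))"
    using S unfolding tm .
  hence "(\<lambda>n. complex_of_real (pi * (8*y / (pi*((2*real n+1)^2 + 4*y^2))))) sums (of_real (pi * tanh (pi * y)))"
    using sums_mult[of _ _ "\<i>"] by (force simp: algebra_simps)
  hence "(\<lambda>n. pi * (8*y / (pi*((2*real n+1)^2 + 4*y^2)))) sums (pi * tanh (pi * y))"
    by (simp only: sums_of_real_iff)
  hence "(\<lambda>n. inverse pi * (pi * (8*y / (pi*((2*real n+1)^2 + 4*y^2))))) sums (inverse pi * (pi * tanh (pi * y)))"
    by (rule sums_mult)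
  thus ?thesis by (simp add: field_simps)
qed

lemma has_integral_Ioi_Ici:
  fixes f :: "real \<Rightarrow> real"
  shows "(f has_integral I) {0<..} \<longleftrightarrow> (f has_integral I) {0..}"
  by (rule has_integral_spike_set_eq; rule negligible_subset[of "{0}"]) auto

lemma improper_FTC_nonneg:
  fixes f F :: "real \<Rightarrow> real"
  assumes D: "\<And>x. x > 0 \<Longrightarrow> (F has_real_derivative f x) (at x)"
    and C: "\<And>x. x > 0 \<Longrightarrow> isCont f x"
    and N: "\<And>x. x > 0 \<Longrightarrow> f x \<ge> 0"
    and A: "(F \<longlongrightarrow> A) (at_right 0)"
    and B: "(F \<longlongrightarrow> B) at_top"
  shows "(f has_integral (B - A)) {0..}"
proof -
  have e: "einterval (ereal 0) \<infinity> = {0<..}" by (auto simp: einterval_iff)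
  have *: "set_integrable lborel (einterval (ereal 0) \<infinity>) f" "(LBINT x=ereal 0..\<infinity>. f x) = B - A"
    by (rule interval_integral_FTC_nonneg[where F=F];
        use D C N A B in \<open>auto simp: ereal_tendsto_simps1\<close>)+
  have si: "set_integrable lborel {0<..} f" using *(1) e by simp
  have "(LBINT x : {0<..}. f x) = B - A"
    using *(2) by (simp add: interval_integral_to_infinity_eq)
  with set_borel_integral_eq_integral[OF si] have "(f has_integral (B - A)) {0<..}"
    by (metis has_integral_integrable_integral)
  thus ?thesis by (simp add: has_integral_Ioi_Ici)
qed

lemma deriv_arctan_part:
  fixes b x :: real assumes b: "b > 0"
  shows "((\<lambda>x. arctan (2*x/b)) has_real_derivative 2*b/(b^2+4*x^2)) (at x)"
proof -
  have "b^2+4*x^2 > 0" using b by (intro add_pos_nonneg) auto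
  hence nz: "b^2+4*x^2 \<noteq> 0" by simp
  show ?thesis
    apply (rule DERIV_cong)
     apply (rule derivative_eq_intros refl)+
    using b nz apply simp_all
    using b nz by (simp add: field_simps power2_eq_square)
qed

lemma deriv_rat2_part:
  fixes b x :: real assumes b: "b > 0"
  shows "((\<lambda>x. x/(2*b^2*(b^2+4*x^2)) + arctan (2*x/b)/(4*b^3)) has_real_derivative 1/(b^2+4*x^2)^2) (at x)"
proof -
  define D where "D = b^2+4*x^2"
  have p: "D > 0" using b by (simp add: add_pos_nonneg D_def)
  have e8: "8*x^2 = 2*(D - b^2)" by (simp add: D_def)
  have nz: "b^2+4*x^2 \<noteq> 0" using p by (simp add: D_def)
  have d1: "((\<lambda>x. x/(2*b^2*(b^2+4*x^2))) has_real_derivative (D - 8*x^2)/(2*b^2*D^2)) (at x)"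
    apply (rule DERIV_cong)
     apply (rule derivative_eq_intros refl)+
    using b nz apply simp_all
    unfolding D_def[symmetric] using p b by (simp add: field_simps power2_eq_square)
  have d2: "((\<lambda>x. arctan (2*x/b)/(4*b^3)) has_real_derivative 2*b/D/(4*b^3)) (at x)"
    unfolding D_def by (rule DERIV_cdivide[OF deriv_arctan_part[OF b]])
  show ?thesis
    apply (rule DERIV_cong[OF DERIV_add[OF d1 d2]])
    unfolding D_def[symmetric] e8 using p b by (simp add: field_simps power2_eq_square power3_eq_cube)
qed

lemma int_rat1:
  fixes b :: real assumes b: "b > 0"
  shows "((\<lambda>x. 1/(b^2+4*x^2)) has_integral pi/(4*b)) {0..}"
proof -
  define F where "F x = arctan (2*x/b)/(2*b)" for x
  have "((\<lambda>x. 1/(b^2+4*x^2)) has_integral (pi/(4*b) - 0)) {0..}"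
  proof (rule improper_FTC_nonneg[where F=F])
    fix x :: real assume "x > 0"
    have p: "b^2+4*x^2 > 0" using b by (simp add: add_pos_nonneg)
    show "(F has_real_derivative 1/(b^2+4*x^2)) (at x)"
      unfolding F_def
      apply (rule DERIV_cong[OF DERIV_cdivide[OF deriv_arctan_part[OF b]]])
      using b by simp
    show "isCont (\<lambda>x. 1/(b^2+4*x^2)) x" using p by (auto intro!: continuous_intros)
    show "0 \<le> 1/(b^2+4*x^2)" using p by simp
  next
    show "(F \<longlongrightarrow> 0) (at_right 0)" unfolding F_def using b by real_asymp
    have "(F \<longlongrightarrow> pi * inverse b / 4) at_top" unfolding F_def using b by real_asymp
    moreover have "pi * inverse b / 4 = pi/(4*b)" using b by (simp add: field_simps)
    ultimately show "(F \<longlongrightarrow> pi/(4*b)) at_top" by simp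
  qed
  moreover have "pi/(4*b) - 0 = pi/(4*b)" by (simp add: divide_divide_eq_left)
  ultimately show ?thesis by simp
qed

lemma int_rat2:
  fixes b :: real assumes b: "b > 0"
  shows "((\<lambda>x. 1/(b^2+4*x^2)^2) has_integral pi/(8*b^3)) {0..}"
proof -
  define F where "F x = x/(2*b^2*(b^2+4*x^2)) + arctan (2*x/b)/(4*b^3)" for x
  have "((\<lambda>x. 1/(b^2+4*x^2)^2) has_integral (pi/(8*b^3) - 0)) {0..}"
  proof (rule improper_FTC_nonneg[where F=F])
    fix x :: real assume "x > 0"
    have p: "b^2+4*x^2 > 0" using b by (simp add: add_pos_nonneg)
    show "(F has_real_derivative 1/(b^2+4*x^2)^2) (at x)"
      unfolding F_def by (rule deriv_rat2_part[OF b])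
    show "isCont (\<lambda>x. 1/(b^2+4*x^2)^2) x" using p by (auto intro!: continuous_intros)
    show "0 \<le> 1/(b^2+4*x^2)^2" using p by simp
  next
    show "(F \<longlongrightarrow> 0) (at_right 0)" unfolding F_def using b by real_asymp
    have "(F \<longlongrightarrow> pi * inverse (b^3) / 8) at_top" unfolding F_def using b by real_asymp
    moreover have "pi * inverse (b^3) / 8 = pi/(8*b^3)" using b by (simp add: field_simps)
    ultimately show "(F \<longlongrightarrow> pi/(8*b^3)) at_top" by simp
  qed
  moreover have "pi/(8*b^3) - 0 = pi/(8*b^3)" by (simp add: divide_divide_eq_left)
  ultimately show ?thesis by simp
qed

lemma summable_odd_sq: "summable (\<lambda>k. 1/(2*real k+1)^2)"
proof (rule summable_comparison_test[OF _ sums_summable[OF inverse_squares_sums]])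
  have "norm (1/(2*real n+1)^2) \<le> 1 / real ((n+1)^2)" for n
  proof -
    have "real ((n+1)^2) \<le> (2*real n+1)^2"
      unfolding of_nat_power by (intro power_mono) auto
    moreover have "real ((n+1)^2) > 0" by simp
    ultimately show ?thesis by (simp add: frac_le)
  qed
  thus "\<exists>N. \<forall>n\<ge>N. norm (1/(2*real n+1)^2) \<le> 1 / real ((n+1)^2)" by blast
qed

lemma summable_odd_cube: "summable (\<lambda>k. 1/(2*real k+1)^3)"
proof (rule summable_comparison_test[OF _ summable_odd_sq])
  show "\<exists>N. \<forall>n\<ge>N. norm (1/(2*real n+1)^3) \<le> 1/(2*real n+1)^2"
    by (intro exI[of _ 0] allI impI) (auto simp: field_simps power_increasing)
qed

lemma aux_div: "D \<noteq> 0 \<Longrightarrow> 8*D/D^2 = 8/(D::real)" by (simp add: power2_eq_square)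

definition bb :: "nat \<Rightarrow> real" where "bb k = pi * (2*real k+1)"

lemma bb_pos: "bb k > 0" by (simp add: bb_def add_pos_nonneg)

lemma tanh_series2:
  fixes x :: real
  shows "(\<lambda>k. 8*x / (bb k^2 + 4*x^2)) sums tanh x"
proof -
  have s1: "(\<lambda>k. 8*(x/pi) / (pi*((2*real k+1)^2 + 4*(x/pi)^2))) sums tanh (pi*(x/pi))"
    by (rule tanh_series)
  have eq2: "pi*(x/pi) = x" by simp
  have eqk: "8*(x/pi) / (pi*((2*real k+1)^2 + 4*(x/pi)^2)) = 8*x / (bb k^2 + 4*x^2)" for k
  proof -
    define Q where "Q = (2*real k+1)^2 + 4*(x/pi)^2"
    have "Q > 0" unfolding Q_def by (intro add_pos_nonneg) auto
    have e: "pi*pi*Q = bb k^2 + 4*x^2"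
      unfolding Q_def bb_def by (simp add: power2_eq_square field_simps)
    have "8*(x/pi) / (pi*Q) = 8*x/(bb k^2 + 4*x^2)" unfolding e[symmetric] using \<open>Q > 0\<close> by (simp add: field_simps)
    thus ?thesis unfolding Q_def .
  qed
  show ?thesis using s1 unfolding eqk eq2 .
qed

lemma summable_bb_inv_sq: "summable (\<lambda>k. 8 / bb k^2)"
proof -
  have "summable (\<lambda>k. (8/pi^2) * (1/(2*real k+1)^2))"
    by (intro summable_mult summable_odd_sq)
  moreover have "(\<lambda>k. (8/pi^2) * (1/(2*real k+1)^2)) = (\<lambda>k. 8 / bb k^2)"
    by (auto simp: bb_def power_mult_distrib)
  ultimately show ?thesis by simp
qed

lemma sech_series:
  fixes x :: real
  shows "(\<lambda>k. 8*(bb k^2 - 4*x^2) / (bb k^2 + 4*x^2)^2) sums (1 - tanh x ^ 2)"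
proof -
  define f where "f k x = 8*x / (bb k^2 + 4*x^2)" for k and x :: real
  define f' where "f' k x = 8*(bb k^2 - 4*x^2) / (bb k^2 + 4*x^2)^2" for k and x :: real
  have pos: "bb k^2 + 4*x^2 > 0" for k and x :: real
    using bb_pos[of k] by (intro add_pos_nonneg) auto
  have der: "(f k has_field_derivative f' k x) (at x within UNIV)" for k x
  proof -
    have nz: "bb k^2 + 4*x^2 \<noteq> 0" using pos[of k x] by simp
    show ?thesis unfolding f_def f'_def
      apply (rule DERIV_cong)
       apply (rule derivative_eq_intros refl)+
      using nz apply simp_all
      using nz by (simp add: field_simps power2_eq_square)
  qed
  have bnd: "norm (f' k x) \<le> 8 / bb k^2" for k x
  proof -
    have "bb k^2 \<ge> 0" "x^2 \<ge> 0" by auto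
    hence "\<bar>bb k^2 - 4*x^2\<bar> \<le> bb k^2 + 4*x^2" by (auto simp: abs_le_iff)
    hence "\<bar>f' k x\<bar> \<le> 8 * (bb k^2 + 4*x^2) / (bb k^2 + 4*x^2)^2"
      unfolding f'_def using pos[of k x] by (simp add: abs_mult divide_right_mono)
    also have "\<dots> = 8 / (bb k^2 + 4*x^2)"
      using pos[of k x] aux_div[of "bb k^2 + 4*x^2"] by simp
    also have "\<dots> \<le> 8 / bb k^2" using bb_pos[of k] pos[of k x] by (intro divide_left_mono mult_pos_pos) auto
    finally show ?thesis by simp
  qed
  have uc: "uniformly_convergent_on UNIV (\<lambda>n x. \<Sum>i<n. f' i x)"
    by (rule Weierstrass_m_test'[OF bnd summable_bb_inv_sq])
  have sf: "summable (\<lambda>n. f n 0)" by (simp add: f_def)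
  have D: "((\<lambda>x. \<Sum>n. f n x) has_field_derivative (\<Sum>n. f' n x)) (at x)"
    by (rule has_field_derivative_series'(2)[OF convex_UNIV der uc _ sf]) auto
  have eqf: "(\<lambda>x. \<Sum>n. f n x) = tanh"
    using tanh_series2 by (auto simp: f_def sums_iff)
  have "cosh x \<noteq> 0" using cosh_real_pos[of x] by simp
  hence D2: "(tanh has_field_derivative 1 - tanh x ^ 2) (at x)"
  proof -
    have "((\<lambda>x. tanh x) has_field_derivative (1 - (tanh x)^2) * 1) (at x)"
      by (rule has_field_derivative_tanh[of "\<lambda>x. x"]) (use \<open>cosh x \<noteq> 0\<close> in \<open>auto intro: DERIV_ident\<close>)
    thus ?thesis by simp
  qed
  have "(\<Sum>n. f' n x) = 1 - tanh x ^ 2"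
    using DERIV_unique[OF D[unfolded eqf] D2] .
  moreover have "summable (\<lambda>n. f' n x)"
    by (rule summable_comparison_test[OF _ summable_bb_inv_sq]) (use bnd in auto)
  ultimately show ?thesis unfolding f'_def by (simp add: sums_iff)
qed

lemma rhs_series:
  fixes x :: real assumes x: "x > 0"
  shows "(\<lambda>k. 64 / (bb k^2 + 4*x^2)^2) sums ((sinh x * cosh x - x) / (x^3 * (cosh x)^2))"
proof -
  have pos: "bb k^2 + 4*x^2 > 0" for k
    using bb_pos[of k] by (intro add_pos_nonneg) auto
  have c: "cosh x \<noteq> 0" using cosh_real_pos[of x] by simp
  have "(\<lambda>k. (8*x / (bb k^2 + 4*x^2) - x * (8*(bb k^2 - 4*x^2) / (bb k^2 + 4*x^2)^2)) / x^3)
        sums ((tanh x - x * (1 - tanh x ^ 2)) / x^3)"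
    by (intro sums_divide sums_diff sums_mult tanh_series2 sech_series)
  moreover have "(8*x / (bb k^2 + 4*x^2) - x * (8*(bb k^2 - 4*x^2) / (bb k^2 + 4*x^2)^2)) / x^3
       = 64 / (bb k^2 + 4*x^2)^2" for k
  proof -
    define D where "D = bb k^2 + 4*x^2"
    have Dp: "D > 0" using pos[of k] by (simp add: D_def)
    have b2: "bb k^2 = D - 4*x^2" by (simp add: D_def)
    show ?thesis unfolding D_def[symmetric] b2 using Dp x
      by (simp add: field_simps power2_eq_square power3_eq_cube)
  qed
  moreover have "(tanh x - x * (1 - tanh x ^ 2)) / x^3 = (sinh x * cosh x - x) / (x^3 * (cosh x)^2)"
  proof -
    have h: "cosh x ^ 2 - sinh x ^ 2 = 1" by (simp add: cosh_square_eq)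
    have "1 - tanh x ^ 2 = (cosh x ^ 2 - sinh x ^ 2) / (cosh x)^2"
      using c by (simp add: tanh_def field_simps)
    hence e: "1 - tanh x ^ 2 = 1 / (cosh x)^2" unfolding h .
    show ?thesis unfolding e using c x by (simp add: tanh_def field_simps power2_eq_square)
  qed
  ultimately show ?thesis by simp
qed

lemma bb_cube: "8*pi / bb k^3 = (8/pi^2) * (1/(2*real k+1)^3)"
  by (simp add: bb_def power_mult_distrib power3_eq_cube power2_eq_square)

lemma summable_bb_cube: "summable (\<lambda>k. 8*pi / bb k^3)"
  unfolding bb_cube by (intro summable_mult summable_odd_cube)

lemma rhs_has_integral:
  "(rhs_integrand has_integral (\<Sum>k. 8*pi / bb k^3)) {0..}"
proof -
  define f where "f n x = (\<Sum>i<n. 64 / (bb i^2 + 4*x^2)^2)" for n and x :: real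
  have fi: "(f n has_integral (\<Sum>i<n. 8*pi / bb i^3)) {0<..}" for n
    unfolding f_def has_integral_Ioi_Ici
  proof (intro has_integral_sum)
    fix i assume "i \<in> {..<n}"
    have "((\<lambda>x. 64 * (1/(bb i^2+4*x^2)^2)) has_integral 64 * (pi/(8*bb i^3))) {0..}"
      by (intro has_integral_mult_right int_rat2 bb_pos)
    thus "((\<lambda>x. 64 / (bb i^2 + 4*x^2)^2) has_integral 8*pi / bb i^3) {0..}" by simp
  qed auto
  show ?thesis unfolding has_integral_Ioi_Ici[symmetric]
  proof (rule has_integral_monotone_convergence_increasing[OF fi])
    fix n and x :: real assume "x \<in> {0<..}"
    show "f n x \<le> f (Suc n) x" unfolding f_def by simp
  next
    fix x :: real assume "x \<in> {0<..}"
    hence "(\<lambda>k. 64 / (bb k^2 + 4*x^2)^2) sums rhs_integrand x"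
      using rhs_series[of x] by (simp add: rhs_integrand_def)
    thus "(\<lambda>n. f n x) \<longlonglongrightarrow> rhs_integrand x" unfolding f_def sums_def .
  next
    show "(\<lambda>n. \<Sum>i<n. 8*pi / bb i^3) \<longlonglongrightarrow> (\<Sum>k. 8*pi / bb k^3)"
      using summable_bb_cube by (simp add: summable_LIMSEQ)
  qed
qed

lemma tele_ineq:
  fixes k :: real assumes "k \<ge> 0"
  shows "1/(16*k^2+4) - 1/(16*(k+1)^2+4) \<le> 1/(2*k+1)^3"
proof -
  have p1: "16*k^2+4 > 0" "16*(k+1)^2+4 > 0" "2*k+1 > 0" using assms by (auto intro: add_nonneg_pos)
  have "1/(16*k^2+4) - 1/(16*(k+1)^2+4) = 16*(2*k+1)/((16*k^2+4)*(16*(k+1)^2+4))"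
    using p1 by (simp add: field_simps power2_eq_square)
  also have "\<dots> \<le> 1/(2*k+1)^3"
  proof -
    have "16*(2*k+1)*(2*k+1)^3 \<le> (16*k^2+4)*(16*(k+1)^2+4)"
      by (simp add: algebra_simps power2_eq_square power3_eq_cube)
    thus ?thesis using p1 by (simp add: divide_simps)
  qed
  finally show ?thesis .
qed

lemma S3_lower: "(\<Sum>k. 1/(2*real k+1)^3) > 1.051795"
proof -
  define f where "f k = 1/(2*real k+1)^3" for k
  define g where "g n = 1/(16*(real n+4)^2+4)" for n
  have sf: "summable f" unfolding f_def by (rule summable_odd_cube)
  have split: "(\<Sum>k. f k) = (\<Sum>n. f (n+4)) + (\<Sum>i<4. f i)"
    by (rule suminf_split_initial_segment[OF sf])
  have g0: "g \<longlonglongrightarrow> 0" unfolding g_def by real_asymp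
  have tel: "(\<lambda>n. g n - g (Suc n)) sums (g 0 - 0)"
    by (rule telescope_sums'[OF g0])
  have le: "g n - g (Suc n) \<le> f (n+4)" for n
    using tele_ineq[of "real n + 4"] by (simp add: f_def g_def add.commute add.left_commute)
  have "g 0 - 0 \<le> (\<Sum>n. f (n+4))"
    using sums_le[OF le tel summable_sums[OF summable_ignore_initial_segment[OF sf, of 4]]] .
  moreover have "(\<Sum>i<4. f i) + g 0 > 1.051795"
    by (simp add: f_def g_def numeral_eq_Suc)
  ultimately show ?thesis using split unfolding f_def by simp
qed

definition gg :: "real \<Rightarrow> real" where "gg u = (sin (pi*u))^2 / u"

definition ff :: "real \<Rightarrow> real" where "ff t = (sin (pi*t))^2 / (1 - t^2)"

lemma sin_sq_bound: "(sin (pi*u))^2 \<le> pi^2 * u^2"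
proof -
  have "\<bar>sin (pi*u)\<bar> \<le> \<bar>pi*u\<bar>" by (rule abs_sin_x_le_abs_x)
  hence "\<bar>sin (pi*u)\<bar>^2 \<le> \<bar>pi*u\<bar>^2" by (intro power_mono) auto
  thus ?thesis by (simp add: power_mult_distrib)
qed

lemma gg_bound: "\<bar>gg u\<bar> \<le> pi^2 * \<bar>u\<bar>"
proof (cases "u = 0")
  case True thus ?thesis by (simp add: gg_def)
next
  case False
  have "\<bar>gg u\<bar> = (sin (pi*u))^2 / \<bar>u\<bar>" by (simp add: gg_def abs_div)
  also have "\<dots> \<le> pi^2 * u^2 / \<bar>u\<bar>" using False by (intro divide_right_mono sin_sq_bound) auto
  also have "pi^2 * u^2 / \<bar>u\<bar> = pi^2 * \<bar>u\<bar>"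
  proof -
    have e: "u^2 = \<bar>u\<bar> * \<bar>u\<bar>" by (simp add: power2_eq_square)
    show ?thesis unfolding e using False by (simp del: abs_mult_self_eq)
  qed
  finally show ?thesis .
qed

lemma sin_sq_le1: "(sin x)^2 \<le> (1::real)"
  by (simp add: sin_squared_eq)

lemma gg_bound2: assumes "u > 0" shows "\<bar>gg u\<bar> \<le> 1/u"
proof -
  have "\<bar>gg u\<bar> = (sin (pi*u))^2 / u" using assms by (simp add: gg_def abs_div)
  also have "\<dots> \<le> 1/u" using assms sin_sq_le1 by (intro divide_right_mono) auto
  finally show ?thesis .
qed

lemma isCont_gg: "isCont gg u"
proof (cases "u = 0")
  case False
  have "isCont (\<lambda>u. (sin (pi*u))^2 / u) u" using False by (auto intro!: continuous_intros)
  thus ?thesis unfolding gg_def[abs_def] .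
next
  case True
  have "(gg \<longlongrightarrow> 0) (at 0)"
  proof (rule Lim_null_comparison)
    show "\<forall>\<^sub>F x in at 0. norm (gg x) \<le> pi^2 * \<bar>x\<bar>" using gg_bound by simp
    show "((\<lambda>x. pi^2 * \<bar>x\<bar>) \<longlongrightarrow> 0) (at 0)"
      by (rule tendsto_eq_intros refl | simp)+
  qed
  thus ?thesis using True by (simp add: isCont_def gg_def)
qed

lemma continuous_on_gg: "continuous_on S gg"
  by (simp add: continuous_at_imp_continuous_on isCont_gg)

lemma gg_odd: "gg (-u) = - gg u" by (simp add: gg_def)

lemma ff_gg: "ff t = (gg (1 - t) + gg (1 + t)) / 2"
proof -
  have s1: "sin (pi*(1-t)) ^2 = sin (pi*t)^2"
    by (simp add: right_diff_distrib sin_diff)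
  have s2: "sin (pi*(1+t)) ^2 = sin (pi*t)^2"
    by (simp add: distrib_left sin_add)
  show ?thesis
  proof (cases "t = 1 \<or> t = -1")
    case True
    thus ?thesis by (auto simp: ff_def gg_def)
  next
    case False
    hence a: "1 - t \<noteq> 0" "1 + t \<noteq> 0" "1 - t^2 \<noteq> 0"
      by (auto simp: power2_eq_square algebra_simps square_eq_1_iff)
    have "1 - t^2 = (1-t)*(1+t)" by (simp add: power2_eq_square algebra_simps)
    thus ?thesis unfolding ff_def gg_def s1 s2 using a by (simp add: field_simps)
  qed
qed

lemma isCont_ff: "isCont ff t"
proof -
  have "isCont (\<lambda>t. (gg (1 - t) + gg (1 + t)) / 2) t"
    by (intro continuous_intros continuous_at_compose[OF _ isCont_gg, unfolded o_def]) auto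
  thus ?thesis unfolding ff_gg[abs_def] .
qed

lemma continuous_on_ff: "continuous_on S ff"
  by (simp add: continuous_at_imp_continuous_on isCont_ff)

lemma pi_sq_ge: "pi^2 \<ge> (9::real)"
proof -
  have "pi^2 \<ge> 3^2" using pi_gt3 by (intro power_mono) auto
  thus ?thesis by simp
qed

lemma ff_bound: assumes "t \<ge> 0" shows "\<bar>ff t\<bar> \<le> 5*pi^2 / (1 + t^2)"
proof (cases "t \<le> 2")
  case True
  have a1: "\<bar>gg (1 - t)\<bar> \<le> pi^2" 
  proof -
    have "\<bar>1 - t\<bar> \<le> 1" using True assms by auto
    hence "pi^2 * \<bar>1 - t\<bar> \<le> pi^2 * 1" by (intro mult_left_mono) auto
    thus ?thesis using gg_bound[of "1-t"] by linarith
  qed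
  have a2: "\<bar>gg (1 + t)\<bar> \<le> 1"
  proof -
    have "1/(1+t) \<le> 1" using assms by simp
    thus ?thesis using gg_bound2[of "1+t"] assms by linarith
  qed
  have "\<bar>ff t\<bar> \<le> (\<bar>gg (1 - t)\<bar> + \<bar>gg (1 + t)\<bar>) / 2" by (simp add: ff_gg)
  also have "\<dots> \<le> pi^2" using a1 a2 pi_sq_ge by simp
  also have "\<dots> \<le> 5*pi^2 / (1 + t^2)"
  proof -
    have "t^2 \<le> 2^2" using True assms by (intro power_mono) auto
    hence "pi^2 * (1 + t^2) \<le> pi^2 * 5" by (intro mult_left_mono) auto
    moreover have "1 + t^2 > 0" by (simp add: add_pos_nonneg)
    ultimately show ?thesis by (simp add: le_divide_eq mult.commute)
  qed
  finally show ?thesis .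
next
  case False
  hence t: "t > 2" by simp
  have t2: "t^2 > 2^2" using t by (intro power_strict_mono) auto
  hence d: "t^2 - 1 > 0" by simp
  have "\<bar>ff t\<bar> = (sin (pi*t))^2 / (t^2 - 1)"
    unfolding ff_def using d by (simp add: abs_div abs_minus_commute)
  also have "\<dots> \<le> 1 / (t^2 - 1)" using d sin_sq_le1 by (intro divide_right_mono) auto
  also have "\<dots> \<le> 5*pi^2 / (1 + t^2)"
  proof -
    have "1 + t^2 \<le> 5 * (t^2 - 1)" using t2 by simp
    also have "\<dots> \<le> 5*pi^2 * (t^2 - 1)" using d pi_sq_ge by (intro mult_right_mono) auto
    finally have "1 * (1 + t^2) \<le> 5*pi^2 * (t^2 - 1)" by simp
    moreover have "1 + t^2 > 0" by (simp add: add_pos_nonneg)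
    ultimately show ?thesis using d by (simp add: divide_simps)
  qed
  finally show ?thesis .
qed

lemma int_gg: "gg integrable_on {a..b}"
  by (rule integrable_continuous_real[OF continuous_on_gg])

lemma int_ff_eq:
  fixes M :: real assumes M: "M \<ge> 2"
  shows "integral {0..M} ff = integral {M-1..M+1} gg / 2"
proof -
  have i1: "(\<lambda>t. gg (1 - t)) integrable_on {0..M}"
    by (intro integrable_continuous_real continuous_on_compose2[OF continuous_on_gg] continuous_intros) auto
  have i2: "(\<lambda>t. gg (1 + t)) integrable_on {0..M}"
    by (intro integrable_continuous_real continuous_on_compose2[OF continuous_on_gg] continuous_intros) auto
  have "integral {0..M} ff = integral {0..M} (\<lambda>t. (gg (1 - t) + gg (1 + t)) / 2)"
    by (simp add: ff_gg[abs_def])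
  also have "\<dots> = (integral {0..M} (\<lambda>t. gg (1 - t)) + integral {0..M} (\<lambda>t. gg (1 + t))) / 2"
    using i1 i2 by (simp add: integral_add integral_divide)
  also have "integral {0..M} (\<lambda>t. gg (1 + t)) = integral {1..M+1} gg"
    using integral_shift_Icc_real[of 0 M gg 1] by (simp add: o_def add.commute)
  also have "integral {0..M} (\<lambda>t. gg (1 - t)) = integral {1-M..1} gg"
  proof -
    have "integral {-0..-(-M)} (\<lambda>x. gg (1 + (-x))) = integral {-M..0} (\<lambda>s. gg (1 + s))"
      using Henstock_Kurzweil_Integration.integral_reflect_real[of 0 "-M" "\<lambda>s. gg (1 + s)"] by simp
    also have "integral {-M..0} (\<lambda>s. gg (1 + s)) = integral {-M+1..0+1} gg"
      using integral_shift_Icc_real[of "-M" 0 gg 1] by (simp add: o_def add.commute)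
    finally show ?thesis by simp
  qed
  also have "integral {1-M..1} gg + integral {1..M+1} gg = integral {M-1..M+1} gg"
  proof -
    have odd0: "integral {-(M-1)..M-1} gg = 0"
    proof -
      have "integral {-(M-1)..-(-(M-1))} (\<lambda>x. gg (-x)) = integral {-(M-1)..M-1} gg"
        using Henstock_Kurzweil_Integration.integral_reflect_real[of "M-1" "-(M-1)" gg] by simp
      hence "- integral {-(M-1)..M-1} gg = integral {-(M-1)..M-1} gg"
        by (simp add: gg_odd integral_neg)
      thus ?thesis by simp
    qed
    have c1: "integral {1-M..1} gg + integral {1..M-1} gg = integral {1-M..M-1} gg"
      using M by (intro Henstock_Kurzweil_Integration.integral_combine int_gg) auto
    have c2: "integral {1..M-1} gg + integral {M-1..M+1} gg = integral {1..M+1} gg"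
      using M by (intro Henstock_Kurzweil_Integration.integral_combine int_gg) auto
    have "integral {1-M..M-1} gg = 0" using odd0 by simp
    with c1 c2 show ?thesis by linarith
  qed
  finally show ?thesis .
qed

lemma int_ff_bound:
  fixes M :: real assumes M: "M \<ge> 2"
  shows "\<bar>integral {0..M} ff\<bar> \<le> 1/(M-1)"
proof -
  have "norm (integral {M-1..M+1} gg) \<le> 1/(M-1) * (M+1 - (M-1))"
  proof (rule integral_bound)
    show "continuous_on {M-1..M+1} gg" by (rule continuous_on_gg)
    fix t assume t: "t \<in> {M-1..M+1}"
    hence "t > 0" using M by auto
    hence "\<bar>gg t\<bar> \<le> 1/t" by (rule gg_bound2)
    also have "1/t \<le> 1/(M-1)" using t M by (intro divide_left_mono) auto
    finally show "norm (gg t) \<le> 1/(M-1)" by simp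
  qed auto
  thus ?thesis using M by (simp add: int_ff_eq)
qed

lemma int_ff_lim: "((\<lambda>M. integral {0..M} ff) \<longlongrightarrow> 0) at_top"
proof (rule Lim_null_comparison)
  show "\<forall>\<^sub>F M in at_top. norm (integral {0..M} ff) \<le> 1/(M-1)"
    using eventually_ge_at_top[of "2::real"] by eventually_elim (simp add: int_ff_bound)
  show "((\<lambda>M::real. 1/(M-1)) \<longlongrightarrow> 0) at_top" by real_asymp
qed

lemma int_lim:
  fixes h G :: "real \<Rightarrow> real"
  assumes h: "h integrable_on {0..}" and G: "G integrable_on {0..}"
    and b: "\<And>x. x \<ge> 0 \<Longrightarrow> \<bar>h x\<bar> \<le> G x"
  shows "(\<lambda>N::nat. integral {0..real N} h) \<longlonglongrightarrow> integral {0..} h"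
proof -
  define f where "f N x = (if x \<in> {..real N} then h x else 0)" for N :: nat and x
  have e: "integral {0..} (f N) = integral {0..real N} h" for N
  proof -
    have "integral {0..} (f N) = integral ({..real N} \<inter> {0..}) h"
      unfolding f_def by (rule integral_restrict_Int)
    also have "{..real N} \<inter> {0..} = {0..real N}" by auto
    finally show ?thesis .
  qed
  have "(\<lambda>N. integral {0..} (f N)) \<longlonglongrightarrow> integral {0..} h"
  proof (rule dominated_convergence(2)[OF _ G])
    fix N
    have hi: "h integrable_on {0..real N}" by (rule integrable_on_subinterval[OF h]) auto
    have se: "{..real N} \<inter> {0..} = {0..real N}" by auto
    show "f N integrable_on {0..}" unfolding f_def integrable_restrict_Int se by (rule hi)
  next
    fix N and x :: real assume "x \<in> {0..}"
    thus "norm (f N x) \<le> G x" using b[of x] by (auto simp: f_def intro: order_trans[OF _ b[of x]])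
  next
    fix x :: real assume "x \<in> {0..}"
    obtain N0 :: nat where "x \<le> real N0" using real_arch_simple by blast
    hence "\<forall>\<^sub>F N in sequentially. f N x = h x"
      by (auto simp: f_def eventually_sequentially intro!: exI[of _ N0] elim: order_trans)
    thus "(\<lambda>N. f N x) \<longlonglongrightarrow> h x" by (rule tendsto_eventually)
  qed
  thus ?thesis unfolding e .
qed

lemma majorant_int:
  fixes R :: real assumes R: "R > 0"
  shows "(\<lambda>x. 5*pi^2 / (1 + (R*x)^2)) integrable_on {0..}"
proof -
  have "((\<lambda>x. (20*pi^2/R^2) * (1/((2/R)^2+4*x^2))) has_integral (20*pi^2/R^2) * (pi/(4*(2/R)))) {0..}"
    using R by (intro has_integral_mult_right int_rat1) auto
  moreover have "(20*pi^2/R^2) * (1/((2/R)^2+4*x^2)) = 5*pi^2 / (1 + (R*x)^2)" for x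
  proof -
    have p: "1 + (R*x)^2 > 0" by (simp add: add_pos_nonneg)
    have "(2/R)^2+4*x^2 = 4*(1 + (R*x)^2)/R^2" using R by (simp add: field_simps power2_eq_square)
    thus ?thesis using R p by (simp add: field_simps)
  qed
  ultimately show ?thesis by (auto simp: integrable_on_def)
qed

lemma ffR_props:
  fixes R :: real assumes R: "R > 0"
  shows "(\<lambda>x. ff (R*x)) absolutely_integrable_on {0..}" "integral {0..} (\<lambda>x. ff (R*x)) = 0"
proof -
  have bnd: "\<bar>ff (R*x)\<bar> \<le> 5*pi^2 / (1 + (R*x)^2)" if "x \<ge> 0" for x
    using ff_bound[of "R*x"] R that by simp
  show ai: "(\<lambda>x. ff (R*x)) absolutely_integrable_on {0..}"
  proof (rule measurable_bounded_by_integrable_imp_absolutely_integrable[OF _ _ majorant_int[OF R]])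
    show "(\<lambda>x. ff (R*x)) \<in> borel_measurable (lebesgue_on {0..})"
      by (intro continuous_imp_measurable_on_sets_lebesgue continuous_on_compose2[OF continuous_on_ff] continuous_intros) auto
  qed (use bnd in auto)
  hence int: "(\<lambda>x. ff (R*x)) integrable_on {0..}" by (simp add: absolutely_integrable_on_def)
  have lim1: "(\<lambda>N::nat. integral {0..real N} (\<lambda>x. ff (R*x))) \<longlonglongrightarrow> integral {0..} (\<lambda>x. ff (R*x))"
    by (rule int_lim[OF int majorant_int[OF R] bnd])
  have eqN: "integral {0..real N} (\<lambda>x. ff (R*x)) = (1/R) * integral {0..R*real N} ff" for N :: nat
  proof -
    have img: "(\<lambda>x. x/R) ` {0..R*real N} = {0..real N}"
    proof
      show "(\<lambda>x. x/R) ` {0..R*real N} \<subseteq> {0..real N}" using R by (auto simp: field_simps)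
      show "{0..real N} \<subseteq> (\<lambda>x. x/R) ` {0..R*real N}"
      proof
        fix y assume "y \<in> {0..real N}"
        hence "R*y \<in> {0..R*real N}" "y = (R*y)/R" using R by auto
        thus "y \<in> (\<lambda>x. x/R) ` {0..R*real N}" by blast
      qed
    qed
    have "integral ((\<lambda>x. x/R) ` {0..R*real N}) (\<lambda>x. ff (R*x)) = (1/\<bar>R\<bar>) *\<^sub>R integral {0..R*real N} ff"
      using R by (intro integral_stretch_real) auto
    thus ?thesis using R unfolding img by simp
  qed
  have "filterlim (\<lambda>N::nat. R * real N) at_top sequentially"
    by (rule filterlim_tendsto_pos_mult_at_top[OF tendsto_const R filterlim_real_sequentially])
  hence "(\<lambda>N::nat. integral {0..R*real N} ff) \<longlonglongrightarrow> 0"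
    by (rule filterlim_compose[OF int_ff_lim])
  hence "(\<lambda>N::nat. (1/R) * integral {0..R*real N} ff) \<longlonglongrightarrow> (1/R) * 0"
    by (intro tendsto_mult tendsto_const)
  hence lim2: "(\<lambda>N::nat. integral {0..real N} (\<lambda>x. ff (R*x))) \<longlonglongrightarrow> 0" unfolding eqN by simp
  show "integral {0..} (\<lambda>x. ff (R*x)) = 0" using LIMSEQ_unique[OF lim1 lim2] .
qed

lemma cos_int_finite_bound:
  fixes c R N :: real assumes c: "c > 0" and R: "R > 0" and N: "N \<ge> 0"
  shows "\<bar>integral {0..N} (\<lambda>x. cos (2*pi*R*x) * (1/(c^2+4*x^2)))\<bar> \<le> 1/(2*pi*R*c^2)"
proof -
  define q where "q x = 1/(c^2+4*x^2)" for x :: real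
  define q' where "q' x = -8*x/(c^2+4*x^2)^2" for x :: real
  define k where "k = 2*pi*R"
  have k: "k > 0" using R by (simp add: k_def)
  have qp: "c^2+4*x^2 > 0" for x :: real using c by (intro add_pos_nonneg) auto
  have dq: "(q has_real_derivative q' x) (at x)" for x
  proof -
    have nz: "c^2+4*x^2 \<noteq> 0" using qp[of x] by simp
    show ?thesis unfolding q_def q'_def
      apply (rule DERIV_cong)
       apply (rule derivative_eq_intros refl)+
      using nz apply simp_all
      using nz by (simp add: field_simps power2_eq_square)
  qed
  define H where "H x = sin (k*x) / k * q x" for x
  define H' where "H' x = cos (k*x) * q x + sin (k*x) / k * q' x" for x
  have dH: "(H has_real_derivative H' x) (at x)" for x
  proof -
    have ds: "((\<lambda>x. sin (k*x) / k) has_real_derivative cos (k*x)) (at x)"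
      using k by (auto intro!: derivative_eq_intros)
    show ?thesis unfolding H_def[abs_def] H'_def
      by (rule DERIV_cong[OF DERIV_mult[OF ds dq]]) (simp add: algebra_simps)
  qed
  have iH': "(H' has_integral (H N - H 0)) {0..N}"
    by (rule fundamental_theorem_of_calculus[OF N])
       (auto intro: has_field_derivative_at_within[OF dH] simp: has_real_derivative_iff_has_vector_derivative[symmetric])
  have iq': "(q' has_integral (q N - q 0)) {0..N}"
    by (rule fundamental_theorem_of_calculus[OF N])
       (auto intro: has_field_derivative_at_within[OF dq] simp: has_real_derivative_iff_has_vector_derivative[symmetric])
  have nz: "c^2+4*x^2 \<noteq> 0" for x :: real using qp[of x] by simp
  have cq: "continuous_on {0..N} q'"
    unfolding q'_def by (auto intro!: continuous_intros simp: nz)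
  have cu: "continuous_on {0..N} (\<lambda>x. sin (k*x) / k * q' x)"
    using cq k by (auto intro!: continuous_intros)
  have iu: "(\<lambda>x. sin (k*x) / k * q' x) integrable_on {0..N}"
    by (rule integrable_continuous_real[OF cu])
  have e: "integral {0..N} (\<lambda>x. cos (k*x) * q x) = (H N - H 0) - integral {0..N} (\<lambda>x. sin (k*x) / k * q' x)"
  proof -
    have "integral {0..N} (\<lambda>x. H' x - sin (k*x) / k * q' x) = integral {0..N} H' - integral {0..N} (\<lambda>x. sin (k*x) / k * q' x)"
      using iH' iu by (intro integral_diff) (auto simp: integrable_on_def)
    moreover have "(\<lambda>x. H' x - sin (k*x) / k * q' x) = (\<lambda>x. cos (k*x) * q x)" by (auto simp: H'_def)
    ultimately show ?thesis using iH' by (simp add: integral_unique)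
  qed
  have bu: "\<bar>integral {0..N} (\<lambda>x. sin (k*x) / k * q' x)\<bar> \<le> (q 0 - q N) / k"
  proof -
    have im: "((\<lambda>x. (-1/k) * q' x) has_integral (-1/k) * (q N - q 0)) {0..N}"
      by (rule has_integral_mult_right[OF iq'])
    have "norm (integral {0..N} (\<lambda>x. sin (k*x) / k * q' x)) \<le> integral {0..N} (\<lambda>x. (-1/k) * q' x)"
    proof (rule integral_norm_bound_integral[OF iu])
      show "(\<lambda>x. (-1/k) * q' x) integrable_on {0..N}" using im by blast
      fix x assume x: "x \<in> {0..N}"
      have "q' x \<le> 0" using x qp[of x] by (simp add: q'_def divide_nonpos_pos)
      have "\<bar>sin (k*x) * q' x\<bar> \<le> \<bar>q' x\<bar>"
        by (simp add: abs_mult mult_left_le_one_le)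
      also have "\<bar>q' x\<bar> = - q' x" using \<open>q' x \<le> 0\<close> by simp
      finally have "\<bar>sin (k*x) * q' x\<bar> / k \<le> (- q' x) / k" using k by (intro divide_right_mono) auto
      thus "norm (sin (k*x) / k * q' x) \<le> (-1/k) * q' x" using k by (simp add: abs_mult abs_div)
    qed
    also have "integral {0..N} (\<lambda>x. (-1/k) * q' x) = (-1/k) * (q N - q 0)"
      using im by (rule integral_unique)
    also have "(-1/k) * (q N - q 0) = (q 0 - q N) / k" by (simp add: diff_divide_distrib)
    finally show ?thesis by simp
  qed
  have bH: "\<bar>H N\<bar> \<le> q N / k"
  proof -
    have "q N \<ge> 0" using qp[of N] by (simp add: q_def)
    hence "\<bar>sin (k*N) * q N\<bar> \<le> q N" by (simp add: abs_mult mult_left_le_one_le)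
    thus ?thesis using k by (simp add: H_def abs_mult divide_right_mono)
  qed
  have H0: "H 0 = 0" by (simp add: H_def)
  have "\<bar>integral {0..N} (\<lambda>x. cos (k*x) * q x)\<bar> \<le> q N / k + (q 0 - q N) / k"
    unfolding e H0 using bu bH by linarith
  also have "q N / k + (q 0 - q N) / k = q 0 / k" by (simp add: diff_divide_distrib)
  also have "q 0 / k = 1/(2*pi*R*c^2)" by (simp add: q_def k_def)
  finally show ?thesis by (simp add: q_def k_def mult.assoc)
qed

lemma sin2_int:
  fixes c R :: real assumes c: "c > 0" and R: "R > 0"
  shows "(\<lambda>x. sin (pi*R*x)^2 * (1/(c^2+4*x^2))) integrable_on {0..}"
    "\<bar>integral {0..} (\<lambda>x. sin (pi*R*x)^2 * (1/(c^2+4*x^2))) - pi/(8*c)\<bar> \<le> 1/(4*pi*R*c^2)"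
proof -
  define q where "q x = 1/(c^2+4*x^2)" for x :: real
  have qp: "c^2+4*x^2 > 0" for x :: real using c by (intro add_pos_nonneg) auto
  have nz: "c^2+4*x^2 \<noteq> 0" for x :: real using qp[of x] by simp
  have qi: "(q has_integral pi/(4*c)) {0..}" unfolding q_def by (rule int_rat1[OF c])
  hence qi': "q integrable_on {0..}" by blast
  have cb: "\<bar>cos (2*pi*R*x) * q x\<bar> \<le> q x" for x
    using qp[of x] abs_cos_le_one[of "2*pi*R*x"] by (simp add: q_def abs_mult divide_right_mono)
  have ci: "(\<lambda>x. cos (2*pi*R*x) * q x) integrable_on {0..}"
  proof -
    have "(\<lambda>x. cos (2*pi*R*x) * q x) absolutely_integrable_on {0..}"
    proof (rule measurable_bounded_by_integrable_imp_absolutely_integrable[OF _ _ qi'])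
      show "(\<lambda>x. cos (2*pi*R*x) * q x) \<in> borel_measurable (lebesgue_on {0..})"
        unfolding q_def by (intro continuous_imp_measurable_on_sets_lebesgue continuous_intros) (auto simp: nz)
    qed (use cb in auto)
    thus ?thesis by (simp add: absolutely_integrable_on_def)
  qed
  define E where "E = integral {0..} (\<lambda>x. cos (2*pi*R*x) * q x)"
  have lim: "(\<lambda>N::nat. integral {0..real N} (\<lambda>x. cos (2*pi*R*x) * q x)) \<longlonglongrightarrow> E"
    unfolding E_def by (rule int_lim[OF ci qi' cb])
  have Eb: "\<bar>E\<bar> \<le> 1/(2*pi*R*c^2)"
  proof -
    have "norm E \<le> 1/(2*pi*R*c^2)"
      by (rule Lim_norm_ubound[OF _ lim])
         (use cos_int_finite_bound[OF c R] in \<open>auto simp: q_def\<close>)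
    thus ?thesis by simp
  qed
  have feq: "(\<lambda>x. sin (pi*R*x)^2 * (1/(c^2+4*x^2))) = (\<lambda>x. (q x - cos (2*pi*R*x) * q x) / 2)"
  proof
    fix x
    have "cos (2*(pi*R*x)) = 1 - 2 * sin (pi*R*x)^2" by (rule cos_double_sin)
    hence e: "cos (2*pi*R*x) = 1 - 2 * sin (pi*R*x)^2" by (simp add: mult.assoc)
    have a: "(r - (1 - 2 * p) * r) / 2 = p * r" for p r :: real by (simp add: algebra_simps)
    show "sin (pi*R*x)^2 * (1/(c^2+4*x^2)) = (q x - cos (2*pi*R*x) * q x) / 2"
      unfolding e q_def a ..
  qed
  have hi: "((\<lambda>x. (q x - cos (2*pi*R*x) * q x) / 2) has_integral (pi/(4*c) - E) / 2) {0..}"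
    unfolding E_def by (intro has_integral_divide has_integral_diff qi integrable_integral ci)
  show "(\<lambda>x. sin (pi*R*x)^2 * (1/(c^2+4*x^2))) integrable_on {0..}"
    unfolding feq using hi by blast
  have "integral {0..} (\<lambda>x. sin (pi*R*x)^2 * (1/(c^2+4*x^2))) = (pi/(4*c) - E) / 2"
    unfolding feq using hi by (rule integral_unique)
  moreover have "(pi/(4*c) - E) / 2 - pi/(8*c) = - E/2" using c by (simp add: field_simps)
  ultimately show "\<bar>integral {0..} (\<lambda>x. sin (pi*R*x)^2 * (1/(c^2+4*x^2))) - pi/(8*c)\<bar> \<le> 1/(4*pi*R*c^2)"
    using Eb by simp
qed

lemma ff_partial:
  fixes R x c :: real assumes R: "R > 0" and x: "x \<ge> 0" and c: "c > 0"
  shows "ff (R*x) * (1/(c^2+4*x^2)) = (R^2 * ff (R*x) + 4 * (sin (pi*R*x)^2 * (1/(c^2+4*x^2)))) / (R^2*c^2+4)"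
proof -
  define D where "D = c^2+4*x^2"
  have Dp: "D > 0" using c by (simp add: D_def add_pos_nonneg)
  have Ep: "R^2*c^2+4 > 0" by (simp add: add_nonneg_pos)
  define s where "s = sin (pi*R*x)^2"
  have ffe: "ff (R*x) = s / (1 - R^2*x^2)" by (simp add: ff_def s_def power_mult_distrib mult.assoc)
  show ?thesis
  proof (cases "R*x = 1")
    case True
    have "sin (pi*R*x) = 0" using True by (simp add: mult.assoc)
    hence "s = 0" by (simp add: s_def)
    thus ?thesis unfolding ffe s_def[symmetric] by simp
  next
    case False
    have "R^2*x^2 \<noteq> 1"
    proof
      assume "R^2*x^2 = 1"
      hence "(R*x)^2 = 1" by (simp add: power_mult_distrib)
      hence "R*x = 1 \<or> R*x = -1" by (simp add: power2_eq_1_iff)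
      moreover have "R*x \<ge> 0" using R x by simp
      ultimately have "R*x = 1" by linarith
      with False show False by simp
    qed
    define F where "F = 1 - R^2*x^2"
    define E where "E = R^2*c^2+4"
    have Fn: "F \<noteq> 0" using \<open>R^2*x^2 \<noteq> 1\<close> by (simp add: F_def)
    have En: "E \<noteq> 0" using Ep by (simp add: E_def)
    have key: "R^2 * D + 4 * F = E" by (simp add: D_def F_def E_def algebra_simps)
    have s1: "R^2 * (s/F) + 4 * (s * (1/D)) = s * (R^2 * D + 4 * F) / (F * D)"
      using Fn Dp by (simp add: field_simps)
    have "(R^2 * (s/F) + 4 * (s * (1/D))) / E = s / F * (1/D)"
      unfolding s1 key using Fn Dp En by (simp add: field_simps)
    thus ?thesis unfolding ffe s_def[symmetric] D_def[symmetric] F_def[symmetric] E_def[symmetric] by simp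
  qed
qed

lemma lhs_series:
  fixes R x :: real assumes R: "R > 0" and x: "x \<ge> 0"
  shows "(\<lambda>k. (8*R^2/pi) * (ff (R*x) * (1/((2*real k+1)^2+4*x^2)))) sums (R^4 * lhs_integrand R x)"
proof (cases "x = 0")
  case True
  thus ?thesis by (simp add: lhs_integrand_def ff_def)
next
  case False
  hence xp: "x > 0" using x by simp
  have s1: "(\<lambda>k. (R^2 * ff (R*x) / x) * (8*x / (pi*((2*real k+1)^2 + 4*x^2)))) sums ((R^2 * ff (R*x) / x) * tanh (pi*x))"
    by (intro sums_mult tanh_series)
  have eqk: "(R^2 * ff (R*x) / x) * (8*x / (pi*((2*real k+1)^2 + 4*x^2))) = (8*R^2/pi) * (ff (R*x) * (1/((2*real k+1)^2+4*x^2)))" for k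
  proof -
    define Q where "Q = (2*real k+1)^2 + 4*x^2"
    have "Q > 0" unfolding Q_def by (intro add_pos_nonneg) auto
    hence "(R^2 * ff (R*x) / x) * (8*x / (pi*Q)) = (8*R^2/pi) * (ff (R*x) * (1/Q))"
      using xp by (simp add: field_simps)
    thus ?thesis unfolding Q_def .
  qed
  have l: "lhs_integrand R x = ff (R*x) * (x * tanh (pi*x) / (R*x)^2)"
    unfolding lhs_integrand_def ff_def by (simp add: mult.assoc)
  have eqv: "(R^2 * ff (R*x) / x) * tanh (pi*x) = R^4 * lhs_integrand R x"
    unfolding l using xp R by (simp add: field_simps power2_eq_square power4_eq_xxxx)
  show ?thesis using s1 unfolding eqk eqv .
qed

definition SS :: "real \<Rightarrow> nat \<Rightarrow> real" where
  "SS R k = integral {0..} (\<lambda>x. sin (pi*R*x)^2 * (1/((2*real k+1)^2+4*x^2)))"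

definition TT :: "real \<Rightarrow> nat \<Rightarrow> real" where
  "TT R k = 32*R^2*SS R k / (pi*(R^2*(2*real k+1)^2+4))"

lemma term_has_int:
  fixes R :: real assumes R: "R > 0"
  shows "((\<lambda>x. (8*R^2/pi) * (ff (R*x) * (1/((2*real k+1)^2+4*x^2)))) has_integral TT R k) {0..}"
proof -
  define c where "c = 2*real k+1"
  have c: "c > 0" by (simp add: c_def add_nonneg_pos)
  define E where "E = R^2*c^2+4"
  have E: "E > 0" by (simp add: E_def add_nonneg_pos)
  have i1: "((\<lambda>x. ff (R*x)) has_integral 0) {0..}"
  proof -
    have "(\<lambda>x. ff (R*x)) integrable_on {0..}"
      using ffR_props(1)[OF R] by (simp add: absolutely_integrable_on_def)
    hence "((\<lambda>x. ff (R*x)) has_integral integral {0..} (\<lambda>x. ff (R*x))) {0..}"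
      by (rule integrable_integral)
    thus ?thesis unfolding ffR_props(2)[OF R] .
  qed
  have i2: "((\<lambda>x. sin (pi*R*x)^2 * (1/(c^2+4*x^2))) has_integral SS R k) {0..}"
    unfolding SS_def c_def using integrable_integral[OF sin2_int(1)[OF c R]] by (simp add: c_def)
  have "((\<lambda>x. (8*R^2/pi) * ((R^2 * ff (R*x) + 4 * (sin (pi*R*x)^2 * (1/(c^2+4*x^2)))) / E))
        has_integral (8*R^2/pi) * ((R^2 * 0 + 4 * SS R k) / E)) {0..}"
    by (intro has_integral_mult_right has_integral_divide has_integral_add i1 i2)
  moreover have "(8*R^2/pi) * ((R^2 * 0 + 4 * SS R k) / E) = TT R k"
    by (simp add: TT_def E_def c_def)
  ultimately have P1: "((\<lambda>x. (8*R^2/pi) * ((R^2 * ff (R*x) + 4 * (sin (pi*R*x)^2 * (1/(c^2+4*x^2)))) / E))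
        has_integral TT R k) {0..}" by simp
  have eq:  "(8*R^2/pi) * ((R^2 * ff (R*x) + 4 * (sin (pi*R*x)^2 * (1/(c^2+4*x^2)))) / E)
       = (8*R^2/pi) * (ff (R*x) * (1/((2*real k+1)^2+4*x^2)))" if "x \<in> {0..}" for x
    using ff_partial[OF R _ c, of x] that by (simp add: E_def c_def)
  show ?thesis by (rule has_integral_eq[OF _ P1]) (rule eq)
qed

lemma lhs_main:
  fixes R :: real assumes R: "R > 0"
  shows "lhs_integrand R integrable_on {0..}" "(\<lambda>k. TT R k) sums (R^4 * integral {0..} (lhs_integrand R))"
proof -
  define Q where "Q = (\<Sum>k. 1/(2*real k+1)^2)"
  define t where "t k x = (8*R^2/pi) * (ff (R*x) * (1/((2*real k+1)^2+4*x^2)))" for k x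
  define h where "h x = (8*R^2/pi) * Q * (5*pi^2 / (1 + (R*x)^2))" for x
  have hi: "h integrable_on {0..}" unfolding h_def
    by (intro integrable_on_mult_right majorant_int[OF R])
  have fi: "((\<lambda>x. \<Sum>k<N. t k x) has_integral (\<Sum>k<N. TT R k)) {0..}" for N
    unfolding t_def by (intro has_integral_sum term_has_int[OF R]) auto
  have tb: "\<bar>t k x\<bar> \<le> (8*R^2/pi) * \<bar>ff (R*x)\<bar> * (1/(2*real k+1)^2)" for k x
  proof -
    have p: "(2*real k+1)^2 > 0" by simp
    have D: "(2*real k+1)^2+4*x^2 > 0" by (intro add_pos_nonneg) auto
    have "1/((2*real k+1)^2+4*x^2) \<le> 1/(2*real k+1)^2" using p D by (intro divide_left_mono mult_pos_pos) auto
    hence "\<bar>ff (R*x)\<bar> * (1/((2*real k+1)^2+4*x^2)) \<le> \<bar>ff (R*x)\<bar> * (1/(2*real k+1)^2)"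
      by (intro mult_left_mono) auto
    hence "(8*R^2/pi) * (\<bar>ff (R*x)\<bar> * (1/((2*real k+1)^2+4*x^2))) \<le> (8*R^2/pi) * (\<bar>ff (R*x)\<bar> * (1/(2*real k+1)^2))"
      by (rule mult_left_mono) auto
    moreover have "\<bar>t k x\<bar> = (8*R^2/pi) * (\<bar>ff (R*x)\<bar> * (1/((2*real k+1)^2+4*x^2)))"
      unfolding t_def abs_mult using D by simp
    ultimately show ?thesis by (simp add: mult.assoc)
  qed
  have Qs: "(\<Sum>k<N. 1/(2*real k+1)^2) \<le> Q" for N
    unfolding Q_def by (rule sum_le_suminf[OF summable_odd_sq]) auto
  have bnd: "norm (\<Sum>k<N. t k x) \<le> h x" if "x \<in> {0..}" for N x
  proof -
    have "norm (\<Sum>k<N. t k x) \<le> (\<Sum>k<N. \<bar>t k x\<bar>)" by (simp add: sum_abs)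
    also have "\<dots> \<le> (\<Sum>k<N. (8*R^2/pi) * \<bar>ff (R*x)\<bar> * (1/(2*real k+1)^2))"
      by (intro sum_mono tb)
    also have "\<dots> = (8*R^2/pi) * \<bar>ff (R*x)\<bar> * (\<Sum>k<N. 1/(2*real k+1)^2)"
      by (simp add: sum_distrib_left)
    also have "\<dots> \<le> (8*R^2/pi) * \<bar>ff (R*x)\<bar> * Q"
      using Qs by (intro mult_left_mono) auto
    also have "\<dots> \<le> (8*R^2/pi) * (5*pi^2 / (1 + (R*x)^2)) * Q"
      using ff_bound[of "R*x"] R that Qs[of 0] by (intro mult_right_mono mult_left_mono) auto
    also have "\<dots> = h x" by (simp add: h_def)
    finally show ?thesis .
  qed
  have conv: "(\<lambda>N. \<Sum>k<N. t k x) \<longlonglongrightarrow> R^4 * lhs_integrand R x" if "x \<in> {0..}" for x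
    using lhs_series[OF R, of x] that unfolding t_def sums_def by simp
  have dc: "(\<lambda>x. R^4 * lhs_integrand R x) integrable_on {0..}"
     "(\<lambda>N. integral {0..} (\<lambda>x. \<Sum>k<N. t k x)) \<longlonglongrightarrow> integral {0..} (\<lambda>x. R^4 * lhs_integrand R x)"
    by (rule dominated_convergence[OF _ hi bnd conv]; use fi in blast)+
  have "(\<lambda>x. (1/R^4) * (R^4 * lhs_integrand R x)) integrable_on {0..}"
    by (rule integrable_on_mult_right[OF dc(1)])
  thus "lhs_integrand R integrable_on {0..}" using R by simp
  have "(\<lambda>N. \<Sum>k<N. TT R k) \<longlonglongrightarrow> integral {0..} (\<lambda>x. R^4 * lhs_integrand R x)"
    using dc(2) unfolding integral_unique[OF fi] .
  thus "(\<lambda>k. TT R k) sums (R^4 * integral {0..} (lhs_integrand R))"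
    by (simp add: sums_def)
qed

lemma bound_A:
  fixes R c a :: real assumes R: "R \<ge> 1" and c: "c \<ge> 1" and a: "\<bar>a\<bar> \<le> 1/(4*pi*R*c^2)"
  shows "\<bar>32*R^2*a / (pi*(R^2*c^2+4))\<bar> \<le> 1/(R*c^2)"
proof -
  define E where "E = R^2*c^2+4"
  have Rp: "R > 0" "c > 0" using R c by auto
  have E1: "E \<ge> R^2*c^2" by (simp add: E_def)
  have Ep: "R^2*c^2 > 0" using Rp by simp
  have Ep': "E > 0" by (simp add: E_def add_nonneg_pos)
  have "\<bar>32*R^2*a / (pi*E)\<bar> = 32*R^2*\<bar>a\<bar> / (pi*E)"
    using Ep' by (simp add: abs_mult abs_div)
  also have "\<dots> \<le> 32*R^2*(1/(4*pi*R*c^2)) / (pi*E)"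
    using a Ep' by (intro divide_right_mono mult_left_mono) auto
  also have "\<dots> = 8*R / (pi^2*c^2*E)" using Rp Ep' by (simp add: field_simps power2_eq_square)
  also have "\<dots> \<le> 8*R / (pi^2*c^2*(R^2*c^2))"
    using E1 Ep Ep' Rp by (intro divide_left_mono mult_left_mono mult_pos_pos) auto
  also have "\<dots> = 8 / (pi^2 * R * c^4)" using Rp by (simp add: field_simps power2_eq_square power4_eq_xxxx)
  also have "\<dots> \<le> 1/(R*c^2)"
  proof -
    have "c^2 \<le> c^4" using c by (simp add: power_increasing)
    moreover have "c^4 \<ge> 0" by simp
    ultimately have "8 * c^2 \<le> 9 * c^4" by linarith
    hence "R * (8 * c^2) \<le> R * (9 * c^4)" using Rp by (intro mult_left_mono) auto
    also have "\<dots> \<le> R * (pi^2 * c^4)" using pi_sq_ge Rp by (intro mult_left_mono mult_right_mono) auto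
    finally have h: "8 * (R*c^2) \<le> pi^2 * R * c^4" by (simp add: algebra_simps)
    define A where "A = pi^2 * R * c^4"
    define B where "B = R*c^2"
    have "A > 0" "B > 0" using Rp by (auto simp: A_def B_def)
    moreover have "8 * B \<le> A" using h by (simp add: A_def B_def)
    ultimately have "8 / A \<le> 1 / B" by (simp add: divide_simps)
    thus ?thesis by (simp add: A_def B_def)
  qed
  finally show ?thesis by (simp add: E_def)
qed

lemma bound_B:
  fixes R c :: real assumes R: "R \<ge> 1" and c: "c \<ge> 1"
  shows "\<bar>4*R^2/(c*(R^2*c^2+4)) - 4/c^3\<bar> \<le> 16/(R*c^2)"
proof -
  define E where "E = R^2*c^2+4"
  have Rp: "R > 0" "c > 0" using R c by auto
  have Ep: "E > 0" by (simp add: E_def add_nonneg_pos)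
  have "4*R^2/(c*E) - 4/c^3 = (4*R^2*c^2 - 4*E)/(c^3*E)" using Rp Ep by (simp add: field_simps power3_eq_cube power2_eq_square)
  also have "4*R^2*c^2 - 4*E = -16" by (simp add: E_def)
  finally have e: "\<bar>4*R^2/(c*E) - 4/c^3\<bar> = 16/(c^3*E)" using Rp Ep by simp
  have "c^3*E \<ge> c^3 * (R^2*c^2)" using Rp by (simp add: E_def)
  moreover have "c^3 * (R^2*c^2) \<ge> R*c^2"
  proof -
    have "c^3 \<ge> 1" using c by simp
    moreover have "R^2 \<ge> R" using R by (simp add: power2_eq_square)
    ultimately have "c^3 * R^2 \<ge> 1 * R" using Rp by (intro mult_mono) auto
    hence "(c^3 * R^2) * c^2 \<ge> R * c^2" using Rp by (intro mult_right_mono) auto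
    thus ?thesis by (simp add: algebra_simps)
  qed
  ultimately have "c^3*E \<ge> R*c^2" by linarith
  hence "16/(c^3*E) \<le> 16/(R*c^2)" using Rp Ep by (intro divide_left_mono mult_pos_pos) auto
  thus ?thesis using e by (simp add: E_def)
qed

lemma TT_bound:
  fixes R :: real assumes R: "R \<ge> 1"
  shows "\<bar>TT R k - 4/(2*real k+1)^3\<bar> \<le> 17/(R*(2*real k+1)^2)"
proof -
  define c where "c = 2*real k+1"
  have c: "c \<ge> 1" by (simp add: c_def)
  have Rp: "R > 0" using R by simp
  define a where "a = SS R k - pi/(8*c)"
  have a: "\<bar>a\<bar> \<le> 1/(4*pi*R*c^2)"
    unfolding a_def SS_def c_def using sin2_int(2)[of "2*real k+1" R] Rp by (simp add: add_nonneg_pos)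
  have e: "TT R k - 4/c^3 = 32*R^2*a / (pi*(R^2*c^2+4)) + (4*R^2/(c*(R^2*c^2+4)) - 4/c^3)"
  proof -
    have E: "R^2*c^2+4 > 0" by (simp add: add_nonneg_pos)
    have "TT R k = 32*R^2*SS R k / (pi*(R^2*c^2+4))" by (simp add: TT_def c_def)
    moreover have "32*R^2*(pi/(8*c)) / (pi*(R^2*c^2+4)) = 4*R^2/(c*(R^2*c^2+4))"
    proof -
      define F where "F = R^2*c^2+4"
      have "F > 0" using E by (simp add: F_def)
      hence "32*R^2*(pi/(8*c)) / (pi*F) = 4*R^2/(c*F)" using c by (simp add: field_simps)
      thus ?thesis by (simp add: F_def)
    qed
    ultimately show ?thesis unfolding a_def by (simp add: right_diff_distrib diff_divide_distrib)
  qed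
  have "\<bar>TT R k - 4/c^3\<bar> \<le> 1/(R*c^2) + 16/(R*c^2)"
    unfolding e by (rule order_trans[OF abs_triangle_ineq add_mono[OF bound_A[OF R c a] bound_B[OF R c]]])
  thus ?thesis by (simp add: c_def)
qed

lemma final_lim:
  "((\<lambda>R. R^4 * integral {0..} (lhs_integrand R)) \<longlongrightarrow> 4 * (\<Sum>k. 1/(2*real k+1)^3)) at_top"
proof -
  define S3 where "S3 = (\<Sum>k. 1/(2*real k+1)^3)"
  define Q where "Q = (\<Sum>k. 1/(2*real k+1)^2)"
  have c3: "(\<lambda>k. 4 * (1/(2*real k+1)^3)) sums (4*S3)"
    unfolding S3_def by (intro sums_mult summable_sums summable_odd_cube)
  have bnd: "norm (R^4 * integral {0..} (lhs_integrand R) - 4*S3) \<le> 17*Q/R" if R: "R \<ge> 1" for R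
  proof -
    have Rp: "R > 0" using R by simp
    have d: "(\<lambda>k. TT R k - 4 * (1/(2*real k+1)^3)) sums (R^4 * integral {0..} (lhs_integrand R) - 4*S3)"
      by (intro sums_diff lhs_main(2)[OF Rp] c3)
    have q: "(\<lambda>k. (17/R) * (1/(2*real k+1)^2)) sums ((17/R)*Q)"
      unfolding Q_def by (intro sums_mult summable_sums summable_odd_sq)
    have qn: "(\<lambda>k. - ((17/R) * (1/(2*real k+1)^2))) sums (- ((17/R)*Q))"
      by (intro sums_minus q)
    have tb: "\<bar>TT R k - 4 * (1/(2*real k+1)^3)\<bar> \<le> (17/R) * (1/(2*real k+1)^2)" for k
      using TT_bound[OF R, of k] by simp
    have "R^4 * integral {0..} (lhs_integrand R) - 4*S3 \<le> (17/R)*Q"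
      by (rule sums_le[OF _ d q]) (rule abs_le_D1[OF tb])
    moreover have "- ((17/R)*Q) \<le> R^4 * integral {0..} (lhs_integrand R) - 4*S3"
    proof (rule sums_le[OF _ qn d])
      fix k show "- ((17/R) * (1/(2*real k+1)^2)) \<le> TT R k - 4 * (1/(2*real k+1)^3)"
        using abs_le_D2[OF tb[of k]] by linarith
    qed
    ultimately show ?thesis by (simp add: abs_le_iff)
  qed
  have "((\<lambda>R. R^4 * integral {0..} (lhs_integrand R) - 4*S3) \<longlongrightarrow> 0) at_top"
  proof (rule Lim_null_comparison)
    show "\<forall>\<^sub>F R in at_top. norm (R^4 * integral {0..} (lhs_integrand R) - 4*S3) \<le> 17*Q/R"
      using eventually_ge_at_top[of "1::real"] by eventually_elim (rule bnd)
    show "((\<lambda>R::real. 17*Q/R) \<longlongrightarrow> 0) at_top" by real_asymp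
  qed
  thus ?thesis unfolding S3_def by (simp add: Lim_null[symmetric])
qed

theorem mainTheorem14:
  shows "(\<forall>R>0. lhs_integrand R integrable_on {0..}) \<and>
         rhs_integrand integrable_on {0..} \<and>
         ((\<lambda>R. R^4 * integral {0..} (lhs_integrand R))
            \<longlongrightarrow> pi^2 / 2 * integral {0..} rhs_integrand) at_top \<and>
         pi^2 / 2 * integral {0..} rhs_integrand > 4.20718"
proof -
  define S3 where "S3 = (\<Sum>k. 1/(2*real k+1)^3)"
  have I: "integral {0..} rhs_integrand = (\<Sum>k. 8*pi / bb k^3)"
    using rhs_has_integral by (rule integral_unique)
  have I2: "(\<Sum>k. 8*pi / bb k^3) = (8/pi^2) * S3"
    unfolding bb_cube S3_def using suminf_mult[OF summable_odd_cube, of "8/pi^2"] by simp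
  have V: "pi^2 / 2 * integral {0..} rhs_integrand = 4 * S3"
    unfolding I I2 by simp
  have "(\<forall>R>0. lhs_integrand R integrable_on {0..})" using lhs_main(1) by blast
  moreover have "rhs_integrand integrable_on {0..}" using rhs_has_integral by blast
  moreover have "((\<lambda>R. R^4 * integral {0..} (lhs_integrand R))
            \<longlongrightarrow> pi^2 / 2 * integral {0..} rhs_integrand) at_top"
    unfolding V S3_def by (rule final_lim)
  moreover have "pi^2 / 2 * integral {0..} rhs_integrand > 4.20718"
    unfolding V S3_def using S3_lower by simp
  ultimately show ?thesis by blast
qed

end
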